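(* Let $(X,d)$ be a locally compact, second countable metric space. Let $(f_\lambda)$ be a sequence in $\Gamma(X)$ and $f,g\in C_{od}(X,X)$ such that $(f_\lambda)$ $\tau_{cc}$-converges to $f$, $(f_\lambda^{-1})$ $\tau_{cc}$-converges to $g$, $\mathrm{im}(f)\subseteq\mathrm{dom}(g)$ and $\mathrm{im}(g)\subseteq\mathrm{dom}(f)$. Then $f$ and $g$ are homeomorphisms (onto their images) and $f^{-1}=g$.
   Context: $\Gamma(X)$ denotes the set of homeomorphisms $f:\mathrm{dom}(f)\to\mathrm{im}(f)$ between open subsets of $X$ (including the empty function). $C_{od}(X,X)$ is the set of continuous maps $f:\mathrm{dom}(f)\to X$ with $\mathrm{dom}(f)$ open in $X$. A sequence $(h_\lambda)$ in $C_{od}(X,X)$ $\tau_{cc}$-converges to $h\in C_{od}(X,X)$ if for every nonempty compact $K\subseteq\mathrm{dom}(h)$ and $\epsilon>0$ there is $\lambda_0$ such that for all $\lambda\ge\lambda_0$, $K\subseteq\mathrm{dom}(h_\lambda)$ and $\sup_{x\in K}d(h_\lambda(x),h(x))<\epsilon$. *)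

theory Defs
  imports "HOL-Analysis.Analysis"
begin

text \<open>A partial map on X is represented by a pair: its domain D and a total
function f whose values outside D are irrelevant.\<close>

definition in_Gamma :: "'a::metric_space set \<Rightarrow> ('a \<Rightarrow> 'a) \<Rightarrow> bool" where
  "in_Gamma D f \<longleftrightarrow> open D \<and> open (f ` D) \<and>
     homeomorphism D (f ` D) f (inv_into D f)"

definition in_Cod :: "'a::metric_space set \<Rightarrow> ('a \<Rightarrow> 'a) \<Rightarrow> bool" where
  "in_Cod D f \<longleftrightarrow> open D \<and> continuous_on D f"

definition cc_conv :: "(nat \<Rightarrow> 'a::metric_space set) \<Rightarrow> (nat \<Rightarrow> 'a \<Rightarrow> 'a)
    \<Rightarrow> 'a set \<Rightarrow> ('a \<Rightarrow> 'a) \<Rightarrow> bool" where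
  "cc_conv Dn hn D h \<longleftrightarrow>
     (\<forall>K. K \<noteq> {} \<and> compact K \<and> K \<subseteq> D \<longrightarrow>
        (\<forall>e>0. \<exists>N. \<forall>n\<ge>N. K \<subseteq> Dn n \<and> (SUP x\<in>K. dist (hn n x) (h x)) < e))"

end

theory Submission
  imports Defs
begin

lemma cnbhd:
  fixes y :: "'a::metric_space"
  assumes "locally_compact_space (euclidean :: 'a topology)" "open D" "y \<in> D"
  shows "\<exists>U K. open U \<and> compact K \<and> y \<in> U \<and> U \<subseteq> K \<and> K \<subseteq> D"
proof -
  have "neighbourhood_base_of (compactin euclidean) (euclidean :: 'a topology)"
    using assms(1) locally_compact_space_neighbourhood_base Hausdorff_space_euclidean by blast
  then show ?thesis using assms(2,3) unfolding neighbourhood_base_of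
    by (metis compactin_euclidean_iff open_openin)
qed

lemma key:
  fixes y :: "'a::metric_space"
  assumes lc: "locally_compact_space (euclidean :: 'a topology)"
    and cc: "cc_conv Dn hn D h" and cod: "in_Cod D h"
    and cont: "\<And>n. continuous_on (Dn n) (hn n)"
    and yD: "y \<in> D" and xs: "xs \<longlonglongrightarrow> y"
  shows "(\<lambda>n. hn n (xs n)) \<longlonglongrightarrow> h y"
proof -
  have oD: "open D" and ch: "continuous_on D h" using cod by (auto simp: in_Cod_def)
  obtain U K where UK: "open U" "compact K" "y \<in> U" "U \<subseteq> K" "K \<subseteq> D"
    using cnbhd[OF lc oD yD] by blast
  have evU: "eventually (\<lambda>n. xs n \<in> U) sequentially"
    using xs UK(1,3) by (simp add: tendsto_def)
  have "isCont h y" using ch oD yD continuous_on_eq_continuous_at by blast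
  then have hx: "(\<lambda>n. h (xs n)) \<longlonglongrightarrow> h y" using xs isCont_tendsto_compose by blast
  show ?thesis
  proof (rule metric_LIMSEQ_I)
    fix e :: real assume e: "e > 0"
    have Kne: "K \<noteq> {}" using UK by blast
    obtain N1 where N1: "\<And>n. n \<ge> N1 \<Longrightarrow> K \<subseteq> Dn n \<and> (SUP x\<in>K. dist (hn n x) (h x)) < e/2"
      using cc Kne UK(2,5) e unfolding cc_conv_def by (meson half_gt_zero)
    obtain N2 where N2: "\<And>n. n \<ge> N2 \<Longrightarrow> xs n \<in> U"
      using evU unfolding eventually_sequentially by blast
    obtain N3 where N3: "\<And>n. n \<ge> N3 \<Longrightarrow> dist (h (xs n)) (h y) < e/2"
      using hx e unfolding lim_sequentially by (meson half_gt_zero)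
    show "\<exists>N. \<forall>n\<ge>N. dist (hn n (xs n)) (h y) < e"
    proof (intro exI allI impI)
      fix n assume n: "n \<ge> max N1 (max N2 N3)"
      have KD: "K \<subseteq> Dn n" and S: "(SUP x\<in>K. dist (hn n x) (h x)) < e/2" using N1 n by auto
      have xK: "xs n \<in> K" using N2 n UK(4) by auto
      have "continuous_on K (\<lambda>x. dist (hn n x) (h x))"
        by (intro continuous_intros continuous_on_subset[OF cont KD] continuous_on_subset[OF ch UK(5)])
      then have "compact ((\<lambda>x. dist (hn n x) (h x)) ` K)"
        using UK(2) compact_continuous_image by blast
      then have "bdd_above ((\<lambda>x. dist (hn n x) (h x)) ` K)"
        by (simp add: bounded_imp_bdd_above compact_imp_bounded)
      then have "dist (hn n (xs n)) (h (xs n)) \<le> (SUP x\<in>K. dist (hn n x) (h x))"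
        by (rule cSUP_upper[OF xK])
      moreover have "dist (h (xs n)) (h y) < e/2" using N3 n by auto
      ultimately show "dist (hn n (xs n)) (h y) < e"
        using S dist_triangle[of "hn n (xs n)" "h y" "h (xs n)"] by linarith
    qed
  qed
qed

theorem mainTheorem11:
  fixes Fd :: "nat \<Rightarrow> 'a::{metric_space, second_countable_topology} set"
    and F :: "nat \<Rightarrow> 'a \<Rightarrow> 'a"
    and Df Dg :: "'a set" and f g :: "'a \<Rightarrow> 'a"
  assumes "locally_compact_space (euclidean :: 'a topology)"
    and "\<And>n. in_Gamma (Fd n) (F n)"
    and "in_Cod Df f" and "in_Cod Dg g"
    and "cc_conv Fd F Df f"
    and "cc_conv (\<lambda>n. F n ` Fd n) (\<lambda>n. inv_into (Fd n) (F n)) Dg g"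
    and "f ` Df \<subseteq> Dg" and "g ` Dg \<subseteq> Df"
  shows "homeomorphism Df Dg f g"
proof -
  have hom: "\<And>n. homeomorphism (Fd n) (F n ` Fd n) (F n) (inv_into (Fd n) (F n))"
    using assms(2) by (simp add: in_Gamma_def)
  have cF: "\<And>n. continuous_on (Fd n) (F n)" using hom homeomorphism_cont1 by blast
  have cG: "\<And>n. continuous_on (F n ` Fd n) (inv_into (Fd n) (F n))"
    using hom homeomorphism_cont2 by blast
  have evin: "eventually (\<lambda>n. z \<in> Dn n) sequentially"
    if "cc_conv Dn hn D h" "z \<in> D" for Dn :: "nat \<Rightarrow> 'a set" and hn D h z
  proof -
    have "{z} \<noteq> {} \<and> compact {z} \<and> {z} \<subseteq> D" using that(2) by simp
    then have "\<forall>e>0. \<exists>N. \<forall>n\<ge>N. {z} \<subseteq> Dn n \<and> (SUP x\<in>{z}. dist (hn n x) (h x)) < e"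
      using that(1) unfolding cc_conv_def by blast
    then obtain N where "\<forall>n\<ge>N. {z} \<subseteq> Dn n \<and> (SUP x\<in>{z}. dist (hn n x) (h x)) < 1"
      using zero_less_one by blast
    then show ?thesis unfolding eventually_sequentially by blast
  qed
  have ptF: "(\<lambda>n. F n z) \<longlonglongrightarrow> f z" if "z \<in> Df" for z
    using key[OF assms(1) assms(5) assms(3) cF that tendsto_const] .
  have ptG: "(\<lambda>n. inv_into (Fd n) (F n) z) \<longlonglongrightarrow> g z" if "z \<in> Dg" for z
    using key[OF assms(1) assms(6) assms(4) cG that tendsto_const] .
  have gf: "g (f x) = x" if x: "x \<in> Df" for x
  proof -
    have fx: "f x \<in> Dg" using assms(7) x by blast
    have L: "(\<lambda>n. inv_into (Fd n) (F n) (F n x)) \<longlonglongrightarrow> g (f x)"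
      using key[OF assms(1) assms(6) assms(4) cG fx ptF[OF x]] .
    have "eventually (\<lambda>n. inv_into (Fd n) (F n) (F n x) = x) sequentially"
      using evin[OF assms(5) x] by eventually_elim (meson hom homeomorphism_apply1)
    then have "(\<lambda>n. inv_into (Fd n) (F n) (F n x)) \<longlonglongrightarrow> x"
      by (rule tendsto_eventually)
    then show ?thesis using L LIMSEQ_unique by metis
  qed
  have fg: "f (g y) = y" if y: "y \<in> Dg" for y
  proof -
    have gy: "g y \<in> Df" using assms(8) y by blast
    have L: "(\<lambda>n. F n (inv_into (Fd n) (F n) y)) \<longlonglongrightarrow> f (g y)"
      using key[OF assms(1) assms(5) assms(3) cF gy ptG[OF y]] .
    have "eventually (\<lambda>n. F n (inv_into (Fd n) (F n) y) = y) sequentially"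
      using evin[OF assms(6) y] by eventually_elim (meson hom homeomorphism_apply2)
    then have "(\<lambda>n. F n (inv_into (Fd n) (F n) y)) \<longlonglongrightarrow> y"
      by (rule tendsto_eventually)
    then show ?thesis using L LIMSEQ_unique by metis
  qed
  have "f ` Df = Dg"
  proof
    show "Dg \<subseteq> f ` Df"
    proof
      fix y assume y: "y \<in> Dg"
      have "g y \<in> Df" using assms(8) y by blast
      then show "y \<in> f ` Df" using fg[OF y] by (metis image_eqI)
    qed
  qed (rule assms(7))
  moreover have "g ` Dg = Df"
  proof
    show "Df \<subseteq> g ` Dg"
    proof
      fix y assume y: "y \<in> Df"
      have "f y \<in> Dg" using assms(7) y by blast
      then show "y \<in> g ` Dg" using gf[OF y] by (metis image_eqI)
    qed
  qed (rule assms(8))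
  ultimately show ?thesis
    using gf fg assms(3,4) unfolding homeomorphism_def in_Cod_def by blast
qed

end
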